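(* Let $n\in\mathbf{N}$, let $A\subset[n]$ have property P, let $k,a,q$ be positive integers and $0\leqslant\alpha\leqslant1$. Let $B$ be a finite set such that every element of $k\cdot B$ is a positive integer which is an integer multiple of some element of $A\cap[1,\alpha n]$, every element of $k\cdot B$ is congruent to $a$ modulo $q$, and $k\cdot B\subset I$ for some interval of integers $I$. Then $$|B|+\left|\left(A_{(\alpha,1]}+A_{(\alpha,1]}\right)\cap I\cap(a+q\mathbf{N})\right|<\frac{|I|}{q}+1.$$
   Context: A set $A\subset\mathbf{N}$ has property P if there are no $x,y,z\in A$ (not necessarily distinct $x,y$) with $z<x$, $z<y$ and $z\mid x+y$. For reals $0\le\alpha<\beta\le1$, $A_{(\alpha,\beta]}=A\cap(\alpha n,\beta n]$. $[\beta]=[1,\beta]\cap\mathbf{N}$; an interval means a set of consecutive integers. $k\cdot B=\{kb:b\in B\}$, $X+Y=\{x+y:x\in X,y\in Y\}$, $a+q\mathbf{N}=\{a+qm:m\in\mathbf{N}\}$. *)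

theory Defs
  imports Complex_Main
begin

definition propP :: "int set \<Rightarrow> bool" where
  "propP A \<longleftrightarrow> \<not> (\<exists>x\<in>A. \<exists>y\<in>A. \<exists>z\<in>A. z < x \<and> z < y \<and> z dvd (x + y))"

definition Aint :: "int set \<Rightarrow> nat \<Rightarrow> real \<Rightarrow> real \<Rightarrow> int set" where
  "Aint A n \<alpha> \<beta> = {x\<in>A. \<alpha> * real n < real_of_int x \<and> real_of_int x \<le> \<beta> * real n}"

definition sumset :: "int set \<Rightarrow> int set \<Rightarrow> int set" where
  "sumset X Y = {x + y | x y. x \<in> X \<and> y \<in> Y}"

end

theory Submission
  imports Defs
begin

lemma count_res:
  fixes c d q r :: int
  assumes q: "q > 0"
  shows "real (card {m\<in>{c..d}. m mod q = r}) < real (card {c..d}) / real_of_int q + 1"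
proof (cases "c \<le> d")
  case False
  then have "{m\<in>{c..d}. m mod q = r} = {}" by auto
  then show ?thesis using False q by simp
next
  case True
  let ?C = "{m\<in>{c..d}. m mod q = r}"
  let ?f = "\<lambda>m. (m - c) div q"
  have inj: "inj_on ?f ?C"
  proof (rule inj_onI)
    fix x y assume x: "x \<in> ?C" and y: "y \<in> ?C" and e: "?f x = ?f y"
    have "(x - c) mod q = (y - c) mod q" using x y by (simp add: mod_diff_cong)
    then have "x - c = y - c" using e by (metis div_mult_mod_eq)
    then show "x = y" by simp
  qed
  have sub: "?f ` ?C \<subseteq> {0..(d-c) div q}"
    using q by (auto intro!: zdiv_mono1 simp: pos_imp_zdiv_nonneg_iff)
  have "card ?C = card (?f ` ?C)" using inj by (simp add: card_image)
  also have "\<dots> \<le> card {0..(d-c) div q}" using sub by (intro card_mono) auto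
  also have "\<dots> = nat ((d-c) div q + 1)" by simp
  finally have c0: "card ?C \<le> nat ((d-c) div q + 1)" .
  have "0 \<le> (d-c) div q" using True q by (simp add: pos_imp_zdiv_nonneg_iff)
  then have c2: "int (nat ((d-c) div q + 1)) = (d-c) div q + 1" by simp
  have c3: "int (card ?C) \<le> int (nat ((d-c) div q + 1))" using c0 by (simp only: of_nat_le_iff)
  have c1: "int (card ?C) \<le> (d-c) div q + 1" using c2 c3 by (simp only:)
  have m0: "(d-c) mod q \<ge> 0" using q by simp
  have "q * ((d-c) div q) + (d-c) mod q = d - c" by (simp add: mult_div_mod_eq)
  then have m1: "q * ((d-c) div q) \<le> d - c" using m0 by linarith
  have "q * int (card ?C) \<le> q * ((d-c) div q + 1)" using c1 q by (intro mult_left_mono) auto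
  also have "\<dots> = q * ((d-c) div q) + q" by (simp add: distrib_left)
  finally have m2: "q * int (card ?C) \<le> d - c + q" using m1 by linarith
  have m3: "int (card {c..d}) = d - c + 1" using True by simp
  have "q * int (card ?C) < int (card {c..d}) + q" using m2 m3 by linarith
  then have "real_of_int (q * int (card ?C)) < real_of_int (int (card {c..d}) + q)"
    by (simp only: of_int_less_iff)
  then have "real_of_int q * real (card ?C) < real (card {c..d}) + real_of_int q"
    by (simp only: of_int_mult of_int_add of_int_of_nat_eq)
  then show ?thesis using q by (simp add: field_simps)
qed

theorem mainTheorem5:
  fixes n :: nat and A :: "int set" and k a q :: int and \<alpha> :: real
    and B :: "real set" and I :: "int set"
  assumes "A \<subseteq> {1..int n}" and "propP A"
    and "k > 0" "a > 0" "q > 0"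
    and "0 \<le> \<alpha>" "\<alpha> \<le> 1"
    and "finite B"
    and "\<forall>b\<in>B. \<exists>m::int. real_of_int k * b = real_of_int m \<and> m > 0
           \<and> (\<exists>d\<in>A. 1 \<le> d \<and> real_of_int d \<le> \<alpha> * real n \<and> d dvd m)
           \<and> m mod q = a mod q \<and> m \<in> I"
    and "\<exists>c d. I = {c..d}"
  shows "real (card B)
    + real (card (sumset (Aint A n \<alpha> 1) (Aint A n \<alpha> 1) \<inter> I \<inter> {a + q * int m | m. True}))
    < real (card I) / real_of_int q + 1"
proof -
  obtain c d where I: "I = {c..d}" using assms(10) by blast
  define S where "S = sumset (Aint A n \<alpha> 1) (Aint A n \<alpha> 1) \<inter> I \<inter> {a + q * int m | m. True}"
  define C where "C = {m\<in>{c..d}. m mod q = a mod q}"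
  define g where "g = (\<lambda>b::real. \<lfloor>real_of_int k * b\<rfloor>)"
  have gB: "\<And>b. b \<in> B \<Longrightarrow> real_of_int k * b = real_of_int (g b) \<and> g b > 0
           \<and> (\<exists>d\<in>A. 1 \<le> d \<and> real_of_int d \<le> \<alpha> * real n \<and> d dvd g b)
           \<and> g b mod q = a mod q \<and> g b \<in> I"
  proof -
    fix b assume "b \<in> B"
    then obtain m :: int where "real_of_int k * b = real_of_int m \<and> m > 0
           \<and> (\<exists>d\<in>A. 1 \<le> d \<and> real_of_int d \<le> \<alpha> * real n \<and> d dvd m)
           \<and> m mod q = a mod q \<and> m \<in> I" using assms(9) by blast
    moreover then have "g b = m" unfolding g_def by simp
    ultimately show "?thesis b" by simp
  qed
  have inj: "inj_on g B"
  proof (rule inj_onI)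
    fix x y assume "x \<in> B" "y \<in> B" "g x = g y"
    then have "real_of_int k * x = real_of_int k * y" using gB by metis
    then show "x = y" using assms(3) by simp
  qed
  have gC: "g ` B \<subseteq> C" using gB I unfolding C_def by auto
  have SC: "S \<subseteq> C" unfolding S_def C_def I
    using assms(5) by (auto simp: mod_add_left_eq)
  have disj: "g ` B \<inter> S = {}"
  proof (rule ccontr)
    assume "g ` B \<inter> S \<noteq> {}"
    then obtain b where b: "b \<in> B" "g b \<in> S" by auto
    then obtain x y where xy: "x \<in> Aint A n \<alpha> 1" "y \<in> Aint A n \<alpha> 1" "g b = x + y"
      unfolding S_def sumset_def by auto
    obtain e where e: "e \<in> A" "real_of_int e \<le> \<alpha> * real n" "e dvd g b" using gB b(1) by blast
    have "e < x" "e < y" using xy(1,2) e(2) unfolding Aint_def by auto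
    then show False using assms(2) e xy unfolding propP_def Aint_def by auto
  qed
  have fC: "finite C" unfolding C_def by (rule finite_subset[of _ "{c..d}"]) auto
  have "card B + card S = card (g ` B) + card S" using inj by (simp add: card_image)
  also have "\<dots> = card (g ` B \<union> S)"
    using disj fC gC SC by (metis card_Un_disjoint finite_subset)
  also have "\<dots> \<le> card C" using gC SC fC by (intro card_mono) auto
  finally have "real (card B) + real (card S) \<le> real (card C)" by linarith
  moreover have "real (card C) < real (card I) / real_of_int q + 1"
    unfolding C_def I using count_res[OF assms(5)] by blast
  ultimately show ?thesis unfolding S_def by linarith
qed

end
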